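(* Let $v$ be a vertex of a graph $\Gamma$ with incident edges $e_1,\dots,e_K$, and for each $i$ let $X_i$ be a nonsingular vector field defined on a neighborhood of the endpoint of $e_i$ at $v$, this neighborhood being identified with $[0,1)$ with $0$ corresponding to $v$. Suppose that (1) each $X_i$ generates a well-defined local semiflow on $(0,1)$; (2) the magnitudes $\|X_i(0)\|$ of the endpoint vectors (taken with respect to the attaching homeomorphisms) are all identical; and (3) among the signs of the endpoint vectors $X_i(0)$ (positive if pointing into $[0,\epsilon)$, negative if pointing out of it) there is exactly one positive sign. Then $\{X_i\}$ generates a well-defined semiflow on the union of these edge neighborhoods in $\Gamma$, i.e., every point has a unique forward orbit.
   Context: A graph consists of finitely many vertices and edges, each edge homeomorphic to $[0,1]$ and attached to vertices along its endpoints, with the quotient topology. A semiflow is a continuous-time dynamical system in which every point has a uniquely defined forward orbit (backward orbits need not be unique). *)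

theory Defs
  imports Complex_Main
begin

text \<open>Local model of the union of the edge neighbourhoods at a vertex v with K incident
  edge-ends e_0, ..., e_(K-1).  The neighbourhood of the end of e_i is identified with [0,1),
  0 corresponding to v.  A point is a pair (i, x) with i < K and 0 < x < 1 (a point on the
  i-th edge-end), or the vertex itself, represented canonically by (0, 0).\<close>

definition star_vertex :: "nat \<times> real" where
  "star_vertex = (0, 0)"

definition star_space :: "nat \<Rightarrow> (nat \<times> real) set" where
  "star_space K = {(i, x). i < K \<and> 0 < x \<and> x < 1} \<union> {star_vertex}"

text \<open>The path metric of the star (quotient topology of the glued intervals).\<close>
fun stardist :: "nat \<times> real \<Rightarrow> nat \<times> real \<Rightarrow> real" where
  "stardist (i, x) (j, y) = (if i = j then \<bar>x - y\<bar> else x + y)"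

definition edge_solution :: "(real \<Rightarrow> real) \<Rightarrow> (real \<Rightarrow> real) \<Rightarrow> real \<Rightarrow> bool" where
  "edge_solution f y T \<longleftrightarrow> 0 < T \<and>
     (\<forall>t\<in>{0..<T}. y t \<in> {0<..<1} \<and>
        (y has_real_derivative f (y t)) (at t within {0..<T}))"

definition generates_local_semiflow :: "(real \<Rightarrow> real) \<Rightarrow> bool" where
  "generates_local_semiflow f \<longleftrightarrow>
     (\<forall>x\<in>{0<..<1}.
        (\<exists>T y. edge_solution f y T \<and> y 0 = x) \<and>
        (\<forall>y1 T1 y2 T2. edge_solution f y1 T1 \<and> edge_solution f y2 T2 \<and> y1 0 = x \<and> y2 0 = x
            \<longrightarrow> (\<forall>t\<in>{0..<min T1 T2}. y1 t = y2 t)))"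

definition star_solution ::
  "nat \<Rightarrow> (nat \<Rightarrow> real \<Rightarrow> real) \<Rightarrow> (real \<Rightarrow> nat \<times> real) \<Rightarrow> real \<Rightarrow> bool" where
  "star_solution K X \<gamma> T \<longleftrightarrow> 0 < T \<and>
     (\<forall>t\<in>{0..<T}. \<gamma> t \<in> star_space K) \<and>
     (\<forall>t\<in>{0..<T}. \<forall>\<epsilon>>0. \<exists>\<delta>>0. \<forall>s\<in>{0..<T}. \<bar>s - t\<bar> < \<delta> \<longrightarrow> stardist (\<gamma> s) (\<gamma> t) < \<epsilon>) \<and>
     (\<forall>t\<in>{0..<T}. \<gamma> t \<noteq> star_vertex \<longrightarrow>
        ((\<lambda>s. snd (\<gamma> s)) has_real_derivative X (fst (\<gamma> t)) (snd (\<gamma> t))) (at t within {0..<T})) \<and>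
     (\<forall>t\<in>{0..<T}. \<gamma> t = star_vertex \<longrightarrow>
        (\<exists>j<K. (\<forall>\<^sub>F s in at_right t. fst (\<gamma> s) = j) \<and>
               ((\<lambda>s. snd (\<gamma> s)) has_real_derivative X j 0) (at t within {t..<T})))"

definition generates_semiflow :: "nat \<Rightarrow> (nat \<Rightarrow> real \<Rightarrow> real) \<Rightarrow> bool" where
  "generates_semiflow K X \<longleftrightarrow>
     (\<forall>p\<in>star_space K.
        (\<exists>\<gamma> T. star_solution K X \<gamma> T \<and> \<gamma> 0 = p) \<and>
        (\<forall>\<gamma>1 T1 \<gamma>2 T2. star_solution K X \<gamma>1 T1 \<and> star_solution K X \<gamma>2 T2 \<and> \<gamma>1 0 = p \<and> \<gamma>2 0 = p
            \<longrightarrow> (\<forall>t\<in>{0..<min T1 T2}. \<gamma>1 t = \<gamma>2 t)))"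

end

theory Submission
  imports Defs "HOL-Analysis.Analysis"
begin



definition phi :: "(nat \<Rightarrow> real \<Rightarrow> real) \<Rightarrow> nat \<Rightarrow> real \<Rightarrow> real" where
  "phi X i x = integral {-1..x} (\<lambda>s. 1 / X i (max s 0)) - integral {-1..0} (\<lambda>s. 1 / X i (max s 0))"

definition Hs :: "(nat \<Rightarrow> real \<Rightarrow> real) \<Rightarrow> nat \<times> real \<Rightarrow> real" where
  "Hs X a = phi X (fst a) (snd a)"

lemma Hs_vertex: "Hs X star_vertex = 0" by (simp add: Hs_def phi_def star_vertex_def)

lemma nat_sep: "(a::nat) \<noteq> b \<Longrightarrow> 1 \<le> \<bar>real a - real b\<bar>"
  by (cases a b rule: linorder_cases) (auto simp: of_nat_less_iff)

lemma star_space_cases: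
  assumes "a \<in> star_space K" "0 < K"
  shows "fst a < K \<and> 0 \<le> snd a \<and> snd a < 1 \<and> (snd a = 0 \<longleftrightarrow> a = star_vertex)"
  using assms by (cases a) (auto simp: star_space_def star_vertex_def)

lemma sd1: "0 \<le> snd a \<Longrightarrow> 0 \<le> snd b \<Longrightarrow> \<bar>snd a - snd b\<bar> \<le> stardist a b"
  by (cases a; cases b) auto

lemma sd2: "fst a \<noteq> fst b \<Longrightarrow> stardist a b = snd a + snd b"
  by (cases a; cases b) auto

lemma sd3: "fst a = fst b \<Longrightarrow> stardist a b = \<bar>snd a - snd b\<bar>"
  by (cases a; cases b) auto

lemma fin_bound:
  fixes P :: "nat \<Rightarrow> real \<Rightarrow> bool"
  assumes "\<forall>i<K. \<exists>B>0. P i B" "\<And>i B B'. P i B \<Longrightarrow> B \<le> B' \<Longrightarrow> P i B'"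
  shows "\<exists>B>0. \<forall>i<K. P i B"
  using assms(1)
proof (induction K)
  case 0
  then show ?case by (auto intro: exI[of _ 1])
next
  case (Suc K)
  then obtain B where B: "B > 0" "\<forall>i<K. P i B" by auto
  from Suc.prems obtain B' where B': "B' > 0" "P K B'" by auto
  show ?case
  proof (intro exI[of _ "max B B'"] conjI allI impI)
    fix i assume "i < Suc K"
    then show "P i (max B B')" using B B' assms(2) by (metis less_Suc_eq max.cobounded1 max.cobounded2)
  qed (use B in auto)
qed

locale starloc =
  fixes K :: nat and X :: "nat \<Rightarrow> real \<Rightarrow> real" and p :: nat
  assumes cont: "\<forall>i<K. continuous_on {0..<1} (X i)"
    and nonsing: "\<forall>i<K. \<forall>x\<in>{0..<1}. X i x \<noteq> 0"
    and pK: "p < K" and ppos: "0 < X p 0"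
    and oneg: "\<forall>i<K. i \<noteq> p \<longrightarrow> X i 0 < 0"

context starloc
begin

lemma sign_const:
  assumes "i < K" "0 \<le> x" "x < 1"
  shows "0 < X i x \<longleftrightarrow> 0 < X i 0"
proof -
  have c: "continuous_on {0..x} (X i)"
    using cont assms by (auto intro: continuous_on_subset)
  have nz: "\<And>z. 0 \<le> z \<Longrightarrow> z \<le> x \<Longrightarrow> X i z \<noteq> 0" using nonsing assms by auto
  show ?thesis
  proof
    assume h: "0 < X i x"
    show "0 < X i 0"
    proof (rule ccontr)
      assume "\<not> 0 < X i 0"
      then have "X i 0 \<le> 0" by simp
      then obtain z where "0 \<le> z" "z \<le> x" "X i z = 0"
        using IVT'[of "X i" 0 0 x] h c assms by auto
      with nz show False by blast
    qed
  next
    assume h: "0 < X i 0"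
    show "0 < X i x"
    proof (rule ccontr)
      assume "\<not> 0 < X i x"
      then have "X i x \<le> 0" by simp
      then obtain z where "0 \<le> z" "z \<le> x" "X i z = 0"
        using IVT2'[of "X i" x 0 0] h c assms by auto
      with nz show False by blast
    qed
  qed
qed

lemma gcont:
  assumes "i < K" "b < 1"
  shows "continuous_on {-1..b} (\<lambda>s. 1 / X i (max s 0))"
proof -
  have "continuous_on {-1..b} (\<lambda>s. X i (max s 0))"
    by (rule continuous_on_compose2[of "{0..<1}" "X i"]) (use cont assms in \<open>auto intro!: continuous_intros\<close>)
  then show ?thesis
    using nonsing assms by (auto intro!: continuous_intros)
qed

lemma phi_deriv:
  assumes "i < K" "-1 < x" "x < 1"
  shows "((\<lambda>y. phi X i y) has_real_derivative 1 / X i (max x 0)) (at x)"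
proof -
  define b where "b = (x + 1) / 2"
  have "b < 1" "x < b" using assms by (auto simp: b_def)
  have "((\<lambda>y. integral {-1..y} (\<lambda>s. 1 / X i (max s 0))) has_real_derivative 1 / X i (max x 0)) (at x within {-1..b})"
    by (rule integral_has_real_derivative[OF gcont]) (use assms \<open>b<1\<close> \<open>x<b\<close> in auto)
  moreover have "at x within {-1..b} = at x"
    by (rule at_within_interior) (use assms \<open>x<b\<close> in auto)
  ultimately have "((\<lambda>y. integral {-1..y} (\<lambda>s. 1 / X i (max s 0))) has_real_derivative 1 / X i (max x 0)) (at x)"
    by simp
  then have "((\<lambda>y. integral {-1..y} (\<lambda>s. 1 / X i (max s 0)) - integral {-1..0} (\<lambda>s. 1 / X i (max s 0))) has_real_derivative 1 / X i (max x 0) - 0) (at x)"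
    by (intro derivative_intros)
  then show ?thesis by (simp add: phi_def)
qed

lemma phi0: "phi X i 0 = 0" by (simp add: phi_def)

lemma Kpos: "0 < K" using pK by simp

lemma phi_inc:
  assumes "i < K" "0 < X i 0" "-1 < x" "x < y" "y < 1"
  shows "phi X i x < phi X i y"
proof (rule DERIV_pos_imp_increasing[OF \<open>x<y\<close>])
  fix z assume "x \<le> z" "z \<le> y"
  then have "0 < X i (max z 0)" using sign_const[of i "max z 0"] assms by auto
  then show "\<exists>d. ((\<lambda>y. phi X i y) has_real_derivative d) (at z) \<and> 0 < d"
    using phi_deriv[of i z] assms \<open>x \<le> z\<close> \<open>z \<le> y\<close> by (intro exI[of _ "1 / X i (max z 0)"]) auto
qed

lemma phi_dec:
  assumes "i < K" "X i 0 < 0" "-1 < x" "x < y" "y < 1"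
  shows "phi X i x > phi X i y"
proof (rule DERIV_neg_imp_decreasing[OF \<open>x<y\<close>])
  fix z assume "x \<le> z" "z \<le> y"
  then have "\<not> 0 < X i (max z 0)" using sign_const[of i "max z 0"] assms by auto
  moreover have "X i (max z 0) \<noteq> 0" using nonsing assms \<open>x \<le> z\<close> \<open>z \<le> y\<close> by auto
  ultimately have "X i (max z 0) < 0" by linarith
  then show "\<exists>d. ((\<lambda>y. phi X i y) has_real_derivative d) (at z) \<and> d < 0"
    using phi_deriv[of i z] assms \<open>x \<le> z\<close> \<open>z \<le> y\<close> by (intro exI[of _ "1 / X i (max z 0)"]) auto
qed

lemma Xi0: "i < K \<Longrightarrow> X i 0 \<noteq> 0" using nonsing by auto

lemma phi_inj:
  assumes "i < K" "-1 < x" "x < 1" "-1 < y" "y < 1" "phi X i x = phi X i y"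
  shows "x = y"
proof (rule ccontr)
  assume "x \<noteq> y"
  then consider "x < y" | "y < x" by linarith
  then show False
  proof cases
    case 1 then show ?thesis using phi_inc[of i x y] phi_dec[of i x y] Xi0[of i] assms
      by (cases "0 < X i 0") auto
  next
    case 2 then show ?thesis using phi_inc[of i y x] phi_dec[of i y x] Xi0[of i] assms
      by (cases "0 < X i 0") auto
  qed
qed

lemma phi_pos:
  assumes "i < K" "0 < x" "x < 1"
  shows "0 < phi X i x \<longleftrightarrow> 0 < X i 0"
  using phi_inc[of i 0 x] phi_dec[of i 0 x] Xi0[of i] assms phi0[of i]
  by (cases "0 < X i 0") auto

lemma phi_nz:
  assumes "i < K" "0 < x" "x < 1"
  shows "phi X i x \<noteq> 0"
  using phi_inc[of i 0 x] phi_dec[of i 0 x] Xi0[of i] assms phi0[of i]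
  by (cases "0 < X i 0") auto

lemma phi_bound: "\<exists>B>0. \<forall>i<K. \<forall>y\<in>{0..1/2}. \<bar>phi X i y\<bar> \<le> B * y"
proof (rule fin_bound)
  show "\<forall>i<K. \<exists>B>0. \<forall>y\<in>{0..1/2}. \<bar>phi X i y\<bar> \<le> B * y"
  proof (intro allI impI)
    fix i assume i: "i < K"
    have "compact ((\<lambda>s. 1 / X i (max s 0)) ` {-1..1/2})"
      by (rule compact_continuous_image[OF gcont]) (use i in auto)
    then have "bounded ((\<lambda>s. 1 / X i (max s 0)) ` {-1..1/2})" by (rule compact_imp_bounded)
    then obtain B where B: "B > 0" "\<And>s. s \<in> {-1..1/2} \<Longrightarrow> \<bar>1 / X i (max s 0)\<bar> \<le> B"
      unfolding bounded_pos by auto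
    show "\<exists>B>0. \<forall>y\<in>{0..1/2}. \<bar>phi X i y\<bar> \<le> B * y"
    proof (intro exI[of _ B] conjI ballI)
      fix y :: real assume y: "y \<in> {0..1/2}"
      show "\<bar>phi X i y\<bar> \<le> B * y"
      proof (cases "y = 0")
        case True then show ?thesis by (simp add: phi0)
      next
        case False
        then have "0 < y" using y by auto
        obtain z where z: "0 < z" "z < y" "phi X i y - phi X i 0 = (y - 0) * (1 / X i (max z 0))"
        proof (rule MVT2[of 0 y "\<lambda>y. phi X i y" "\<lambda>z. 1 / X i (max z 0)", THEN exE])
          show "0 < y" by fact
          fix x :: real assume "0 \<le> x" "x \<le> y"
          then show "((\<lambda>y. phi X i y) has_real_derivative 1 / X i (max x 0)) (at x)"
            using phi_deriv[of i x] i y by auto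
        qed auto
        have "\<bar>1 / X i (max z 0)\<bar> \<le> B" using B(2)[of z] z y by auto
        have "\<bar>y * (1 / X i (max z 0))\<bar> = y * \<bar>1 / X i (max z 0)\<bar>"
          using \<open>0 < y\<close> by (simp only: abs_mult abs_of_pos)
        also have "\<dots> \<le> y * B" by (rule mult_left_mono) (use \<open>0 < y\<close> \<open>\<bar>1 / X i (max z 0)\<bar> \<le> B\<close> in auto)
        finally have "\<bar>y * (1 / X i (max z 0))\<bar> \<le> y * B" .
        then show ?thesis using z by (simp add: phi0 mult.commute)
      qed
    qed (use B in auto)
  qed
next
  fix i B B' assume "\<forall>y\<in>{0..1/2}. \<bar>phi X i y\<bar> \<le> B * y" "B \<le> B'"
  then show "\<forall>y\<in>{0..1/2::real}. \<bar>phi X i y\<bar> \<le> B' * y"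
    by (meson atLeastAtMost_iff mult_right_mono order_trans)
qed

end



context starloc begin

lemma Hs_nz: "a \<in> star_space K \<Longrightarrow> a \<noteq> star_vertex \<Longrightarrow> Hs X a \<noteq> 0"
  using star_space_cases[of a K] Kpos phi_nz[of "fst a" "snd a"] by (auto simp: Hs_def)

lemma H_inj:
  assumes a: "a \<in> star_space K" and b: "b \<in> star_space K" and e: "Hs X a = Hs X b"
    and f: "Hs X a < 0 \<longrightarrow> fst a = fst b"
  shows "a = b"
proof (cases "a = star_vertex")
  case True
  then have "Hs X b = 0" using e Hs_vertex by simp
  then show ?thesis using Hs_nz[OF b] True by auto
next
  case False
  then have ha: "Hs X a \<noteq> 0" using Hs_nz[OF a] by auto
  have bnv: "b \<noteq> star_vertex" using ha e Hs_vertex by auto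
  have A: "fst a < K" "0 < snd a" "snd a < 1" using star_space_cases[OF a Kpos] False by auto
  have B: "fst b < K" "0 < snd b" "snd b < 1" using star_space_cases[OF b Kpos] bnv by auto
  have fe: "fst a = fst b"
  proof (cases "Hs X a < 0")
    case True then show ?thesis using f by auto
  next
    case False
    then have "0 < Hs X a" "0 < Hs X b" using ha e by auto
    then have "0 < X (fst a) 0" "0 < X (fst b) 0" using phi_pos A B by (auto simp: Hs_def)
    then have "fst a = p" "fst b = p" using oneg A B by force+
    then show ?thesis by simp
  qed
  have "snd a = snd b"
    using phi_inj[of "fst a" "snd a" "snd b"] A B e fe by (auto simp: Hs_def)
  then show ?thesis using fe by (simp add: prod_eq_iff)
qed

end

locale starsol = starloc +
  fixes \<gamma> :: "real \<Rightarrow> nat \<times> real" and T :: real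
  assumes sol: "star_solution K X \<gamma> T"
begin

lemma T_pos: "0 < T" using sol by (simp add: star_solution_def)

lemma sp: "t \<in> {0..<T} \<Longrightarrow> \<gamma> t \<in> star_space K \<and> fst (\<gamma> t) < K \<and> 0 \<le> snd (\<gamma> t) \<and> snd (\<gamma> t) < 1 \<and> (snd (\<gamma> t) = 0 \<longleftrightarrow> \<gamma> t = star_vertex)"
  using sol star_space_cases[of "\<gamma> t" K] Kpos by (auto simp: star_solution_def)

lemma gcontd: "t \<in> {0..<T} \<Longrightarrow> e > 0 \<Longrightarrow> \<exists>d>0. \<forall>s\<in>{0..<T}. \<bar>s - t\<bar> < d \<longrightarrow> stardist (\<gamma> s) (\<gamma> t) < e"
  using sol unfolding star_solution_def by blast

lemma w_cont: "continuous_on {0..<T} (\<lambda>s. snd (\<gamma> s))"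
  unfolding continuous_on_iff dist_real_def
proof (intro ballI allI impI)
  fix t e :: real assume t: "t \<in> {0..<T}" and e: "0 < e"
  obtain d where d: "d > 0" "\<forall>s\<in>{0..<T}. \<bar>s - t\<bar> < d \<longrightarrow> stardist (\<gamma> s) (\<gamma> t) < e"
    using gcontd[OF t e] by blast
  show "\<exists>d>0. \<forall>s\<in>{0..<T}. \<bar>s - t\<bar> < d \<longrightarrow> \<bar>snd (\<gamma> s) - snd (\<gamma> t)\<bar> < e"
  proof (intro exI[of _ d] conjI ballI impI)
    fix s assume s: "s \<in> {0..<T}" "\<bar>s - t\<bar> < d"
    have "\<bar>snd (\<gamma> s) - snd (\<gamma> t)\<bar> \<le> stardist (\<gamma> s) (\<gamma> t)"
      using sd1 sp[OF s(1)] sp[OF t] by blast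
    then show "\<bar>snd (\<gamma> s) - snd (\<gamma> t)\<bar> < e" using d s by force
  qed (use d in auto)
qed

lemma edge_loc:
  assumes t: "t \<in> {0..<T}" and nv: "\<gamma> t \<noteq> star_vertex"
  shows "\<exists>d>0. \<forall>s\<in>{0..<T}. \<bar>s - t\<bar> < d \<longrightarrow> fst (\<gamma> s) = fst (\<gamma> t)"
proof -
  have pos: "0 < snd (\<gamma> t)" using sp[OF t] nv by auto
  obtain d where d: "d > 0" "\<forall>s\<in>{0..<T}. \<bar>s - t\<bar> < d \<longrightarrow> stardist (\<gamma> s) (\<gamma> t) < snd (\<gamma> t)"
    using gcontd[OF t pos] by blast
  show ?thesis
  proof (intro exI[of _ d] conjI ballI impI)
    fix s assume s: "s \<in> {0..<T}" "\<bar>s - t\<bar> < d"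
    show "fst (\<gamma> s) = fst (\<gamma> t)"
    proof (rule ccontr)
      assume "fst (\<gamma> s) \<noteq> fst (\<gamma> t)"
      then have "stardist (\<gamma> s) (\<gamma> t) = snd (\<gamma> s) + snd (\<gamma> t)" by (rule sd2)
      moreover have "0 \<le> snd (\<gamma> s)" using sp[OF s(1)] by auto
      ultimately show False using d s by force
    qed
  qed (use d in auto)
qed

lemma h_cont: "continuous_on {0..<T} (\<lambda>s. Hs X (\<gamma> s))"
  unfolding continuous_on_iff dist_real_def
proof (intro ballI allI impI)
  fix t e :: real assume t: "t \<in> {0..<T}" and e: "0 < e"
  show "\<exists>d>0. \<forall>s\<in>{0..<T}. \<bar>s - t\<bar> < d \<longrightarrow> \<bar>Hs X (\<gamma> s) - Hs X (\<gamma> t)\<bar> < e"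
  proof (cases "\<gamma> t = star_vertex")
    case True
    obtain B where B: "B > 0" "\<forall>i<K. \<forall>y\<in>{0..1/2}. \<bar>phi X i y\<bar> \<le> B * y"
      using phi_bound by blast
    have wt: "snd (\<gamma> t) = 0" using True by (simp add: star_vertex_def)
    have "min (1/2) (e/B) > 0" using B e by auto
    then obtain d where d: "d > 0" "\<forall>s\<in>{0..<T}. \<bar>s - t\<bar> < d \<longrightarrow> \<bar>snd (\<gamma> s) - snd (\<gamma> t)\<bar> < min (1/2) (e/B)"
      using w_cont t unfolding continuous_on_iff dist_real_def by blast
    show ?thesis
    proof (intro exI[of _ d] conjI ballI impI)
      fix s assume s: "s \<in> {0..<T}" "\<bar>s - t\<bar> < d"
      have ws: "snd (\<gamma> s) < 1/2" "snd (\<gamma> s) < e / B" using d s wt by auto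
      have s0: "0 \<le> snd (\<gamma> s)" "fst (\<gamma> s) < K" using sp[OF s(1)] by auto
      have "\<bar>Hs X (\<gamma> s)\<bar> \<le> B * snd (\<gamma> s)" using B(2) ws s0 by (auto simp: Hs_def)
      also have "\<dots> < e" using ws B by (simp add: field_simps)
      finally show "\<bar>Hs X (\<gamma> s) - Hs X (\<gamma> t)\<bar> < e" using True Hs_vertex by simp
    qed (use d in auto)
  next
    case False
    define i where "i = fst (\<gamma> t)"
    have x: "0 < snd (\<gamma> t)" "snd (\<gamma> t) < 1" "i < K" using sp[OF t] False by (auto simp: i_def)
    obtain d1 where d1: "d1 > 0" "\<forall>s\<in>{0..<T}. \<bar>s - t\<bar> < d1 \<longrightarrow> fst (\<gamma> s) = i"
      using edge_loc[OF t False] i_def by blast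
    have "isCont (\<lambda>y. phi X i y) (snd (\<gamma> t))"
      using phi_deriv[of i "snd (\<gamma> t)"] x by (intro DERIV_isCont) auto
    moreover have "continuous (at t within {0..<T}) (\<lambda>s. snd (\<gamma> s))"
      using w_cont t continuous_on_eq_continuous_within by blast
    ultimately have "continuous (at t within {0..<T}) (\<lambda>s. phi X i (snd (\<gamma> s)))"
      by (rule continuous_within_compose3)
    then obtain d2 where d2: "d2 > 0" "\<forall>s\<in>{0..<T}. \<bar>s - t\<bar> < d2 \<longrightarrow> \<bar>phi X i (snd (\<gamma> s)) - phi X i (snd (\<gamma> t))\<bar> < e"
      using e unfolding continuous_within_eps_delta dist_real_def by blast
    show ?thesis
    proof (intro exI[of _ "min d1 d2"] conjI ballI impI)
      fix s assume s: "s \<in> {0..<T}" "\<bar>s - t\<bar> < min d1 d2"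
      then show "\<bar>Hs X (\<gamma> s) - Hs X (\<gamma> t)\<bar> < e" using d1 d2 by (auto simp: Hs_def i_def)
    qed (use d1 d2 in auto)
  qed
qed

lemma h_deriv:
  assumes t: "0 < t" "t < T" and nv: "\<gamma> t \<noteq> star_vertex"
  shows "((\<lambda>s. Hs X (\<gamma> s)) has_real_derivative 1) (at t)"
proof -
  have t': "t \<in> {0..<T}" using t by auto
  define i where "i = fst (\<gamma> t)"
  define x where "x = snd (\<gamma> t)"
  have x: "0 < x" "x < 1" "i < K" using sp[OF t'] nv by (auto simp: i_def x_def)
  have "((\<lambda>s. snd (\<gamma> s)) has_real_derivative X i x) (at t within {0..<T})"
    using sol t' nv unfolding star_solution_def i_def x_def by blast
  moreover have "at t within {0..<T} = at t"
    by (rule at_within_interior) (use t in auto)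
  ultimately have dw: "((\<lambda>s. snd (\<gamma> s)) has_real_derivative X i x) (at t)" by simp
  have dp: "((\<lambda>y. phi X i y) has_real_derivative 1 / X i (max x 0)) (at (snd (\<gamma> t)))"
    using phi_deriv[of i x] x by (simp add: x_def)
  have "((\<lambda>s. phi X i (snd (\<gamma> s))) has_real_derivative (1 / X i (max x 0)) * X i x) (at t)"
    by (rule DERIV_chain2[OF dp dw])
  moreover have "(1 / X i (max x 0)) * X i x = 1" using x nonsing by auto
  ultimately have d: "((\<lambda>s. phi X i (snd (\<gamma> s))) has_real_derivative 1) (at t)" by simp
  obtain d1 where d1: "d1 > 0" "\<forall>s\<in>{0..<T}. \<bar>s - t\<bar> < d1 \<longrightarrow> fst (\<gamma> s) = i"
    using edge_loc[OF t' nv] i_def by blast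
  have ev: "eventually (\<lambda>s. Hs X (\<gamma> s) = phi X i (snd (\<gamma> s))) (nhds t)"
    unfolding eventually_nhds_metric dist_real_def
  proof (intro exI[of _ "min d1 (min t (T - t))"] conjI allI impI)
    fix s assume "\<bar>s - t\<bar> < min d1 (min t (T - t))"
    then have "s \<in> {0..<T}" "\<bar>s - t\<bar> < d1" by (auto simp: abs_less_iff)
    then show "Hs X (\<gamma> s) = phi X i (snd (\<gamma> s))" using d1 by (simp add: Hs_def)
  qed (use d1 t in auto)
  show ?thesis using d DERIV_cong_ev[OF refl ev refl] by simp
qed

lemma vertex_iso:
  assumes t: "t \<in> {0..<T}" and v: "\<gamma> t = star_vertex"
  shows "\<exists>d>0. \<forall>s. t < s \<longrightarrow> s < t + d \<longrightarrow> s < T \<longrightarrow> \<gamma> s \<noteq> star_vertex"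
proof -
  obtain j where j: "j < K" "((\<lambda>s. snd (\<gamma> s)) has_real_derivative X j 0) (at t within {t..<T})"
    using sol t v unfolding star_solution_def by blast
  have wt: "snd (\<gamma> t) = 0" using v by (simp add: star_vertex_def)
  have "\<not> X j 0 < 0"
  proof
    assume "X j 0 < 0"
    from has_real_derivative_neg_dec_right[OF j(2) this] obtain d where
      d: "d > 0" "\<forall>h>0. t + h \<in> {t..<T} \<longrightarrow> h < d \<longrightarrow> snd (\<gamma> (t + h)) < snd (\<gamma> t)" by blast
    define mm where "mm = min d (T - t)"
    define hh where "hh = mm / 2"
    have m: "mm \<le> d" "mm \<le> T - t" "mm > 0" using d t by (auto simp: mm_def)
    have "hh > 0" unfolding hh_def using m by linarith
    moreover have "t + hh < T" unfolding hh_def using m by linarith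
    moreover have "hh < d" unfolding hh_def using m by linarith
    ultimately have "hh > 0" "t + hh \<in> {t..<T}" "hh < d" by auto
    then have "snd (\<gamma> (t + hh)) < 0" using d wt by auto
    moreover have "t + hh \<in> {0..<T}" using \<open>t + hh \<in> {t..<T}\<close> t by auto
    ultimately show False using sp by force
  qed
  then have "0 < X j 0" using Xi0[OF j(1)] by linarith
  from has_real_derivative_pos_inc_right[OF j(2) this] obtain d where
    d: "d > 0" "\<forall>h>0. t + h \<in> {t..<T} \<longrightarrow> h < d \<longrightarrow> snd (\<gamma> t) < snd (\<gamma> (t + h))" by blast
  show ?thesis
  proof (intro exI[of _ d] conjI allI impI)
    fix s assume s: "t < s" "s < t + d" "s < T"
    then have "0 < snd (\<gamma> s)" using d(2)[rule_format, of "s - t"] wt by auto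
    then show "\<gamma> s \<noteq> star_vertex" by (auto simp: star_vertex_def)
  qed (use d in auto)
qed

end



context starsol begin

lemma interval:
  assumes ab: "0 \<le> a" "a \<le> b" "b < T" and fin: "finite {s \<in> {a..b}. \<gamma> s = star_vertex}"
  shows "Hs X (\<gamma> b) - b = Hs X (\<gamma> a) - a"
proof (rule has_derivative_zero_unique_strong_interval[of "{a, b} \<union> {s \<in> {a..b}. \<gamma> s = star_vertex}" a b
      "\<lambda>s. Hs X (\<gamma> s) - s" "Hs X (\<gamma> a) - a" b])
  show "finite ({a, b} \<union> {s \<in> {a..b}. \<gamma> s = star_vertex})" using fin by simp
  show "continuous_on {a..b} (\<lambda>s. Hs X (\<gamma> s) - s)"
    by (intro continuous_intros continuous_on_subset[OF h_cont]) (use ab in auto)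
  fix x assume x: "x \<in> {a..b} - ({a, b} \<union> {s \<in> {a..b}. \<gamma> s = star_vertex})"
  then have "0 < x" "x < T" "\<gamma> x \<noteq> star_vertex" using ab by auto
  then have "((\<lambda>s. Hs X (\<gamma> s) - s) has_real_derivative 1 - 1) (at x)"
    by (intro DERIV_diff h_deriv DERIV_ident)
  moreover have eq: "(\<lambda>h::real. 0::real) = (*) 0" by auto
  ultimately have "((\<lambda>s. Hs X (\<gamma> s) - s) has_derivative (\<lambda>h. 0)) (at x)"
    unfolding eq by (simp add: has_field_derivative_def)
  then show "((\<lambda>s. Hs X (\<gamma> s) - s) has_derivative (\<lambda>h. 0)) (at x within {a..b})"
    by (rule has_derivative_at_withinI)
qed (use ab in auto)

lemma no_two:
  assumes t1: "t1 \<in> {0..<T}" "\<gamma> t1 = star_vertex" and t2: "t2 \<in> {0..<T}" "\<gamma> t2 = star_vertex"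
    and lt: "t1 < t2"
  shows False
proof -
  obtain d where d: "d > 0" "\<forall>s. t1 < s \<longrightarrow> s < t1 + d \<longrightarrow> s < T \<longrightarrow> \<gamma> s \<noteq> star_vertex"
    using vertex_iso[OF t1] by blast
  define t1' where "t1' = min (t1 + d/2) ((t1 + t2) / 2)"
  have t1': "t1 < t1'" "t1' < t2" "t1' < t1 + d" using d lt unfolding t1'_def min_def by auto
  have nv: "\<gamma> s \<noteq> star_vertex" if "t1 < s" "s \<le> t1'" for s
    using d t1' that t2 by auto
  define S where "S = {s \<in> {t1'..t2}. snd (\<gamma> s) = 0}"
  have "closed S" unfolding S_def
    by (rule continuous_closed_preimage_constant[OF continuous_on_subset[OF w_cont]]) (use t1 t1' t2 in auto)
  moreover have "t2 \<in> S" using t2 t1' by (auto simp: S_def star_vertex_def)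
  moreover have bdd: "bdd_below S" unfolding S_def by (rule bdd_belowI[of _ t1']) auto
  ultimately have mS: "Inf S \<in> S" using closed_contains_Inf by blast
  define m where "m = Inf S"
  have mle: "\<And>s. s \<in> S \<Longrightarrow> m \<le> s" unfolding m_def using bdd by (rule cInf_lower[rotated])
  have m: "t1' \<le> m" "m \<le> t2" "snd (\<gamma> m) = 0" using mS by (auto simp: S_def m_def)
  have mT: "m \<in> {0..<T}" using m t1 t1' t2 by auto
  have mv: "\<gamma> m = star_vertex" using sp[OF mT] m by auto
  have "m \<noteq> t1'" using nv[of t1'] t1' mv by auto
  then have m1: "t1' < m" using m by auto
  have sub: "{s \<in> {t1..m}. \<gamma> s = star_vertex} \<subseteq> {t1, m}"
  proof
    fix s assume s: "s \<in> {s \<in> {t1..m}. \<gamma> s = star_vertex}"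
    show "s \<in> {t1, m}"
    proof (rule ccontr)
      assume "s \<notin> {t1, m}"
      then have "t1 < s" "s < m" using s by auto
      show False
      proof (cases "s \<le> t1'")
        case True then show ?thesis using nv[of s] \<open>t1 < s\<close> s by auto
      next
        case False
        then have "s \<in> S" using s \<open>s < m\<close> m by (auto simp: S_def star_vertex_def)
        then show ?thesis using mle \<open>s < m\<close> by force
      qed
    qed
  qed
  have "Hs X (\<gamma> m) - m = Hs X (\<gamma> t1) - t1"
    by (rule interval) (use t1 m1 t1' mT sub in \<open>auto intro: finite_subset\<close>)
  then have "m = t1" using mv t1 Hs_vertex by simp
  then show False using m1 t1' by simp
qed

lemma h_lin:
  assumes t: "t \<in> {0..<T}"
  shows "Hs X (\<gamma> t) = Hs X (\<gamma> 0) + t"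
proof -
  have "finite {s \<in> {0..t}. \<gamma> s = star_vertex}"
  proof (cases "{s \<in> {0..t}. \<gamma> s = star_vertex} = {}")
    case False
    then obtain s0 where s0: "s0 \<in> {0..t}" "\<gamma> s0 = star_vertex" by auto
    have "{s \<in> {0..t}. \<gamma> s = star_vertex} \<subseteq> {s0}"
    proof
      fix s assume s: "s \<in> {s \<in> {0..t}. \<gamma> s = star_vertex}"
      have "s = s0"
      proof (cases s s0 rule: linorder_cases)
        case less then show ?thesis using no_two[of s s0] s s0 t by auto
      next
        case greater then show ?thesis using no_two[of s0 s] s s0 t by auto
      qed simp
      then show "s \<in> {s0}" by simp
    qed
    then show ?thesis by (rule finite_subset) simp
  next
    case True then show ?thesis by (metis finite.emptyI)
  qed
  then have "Hs X (\<gamma> t) - t = Hs X (\<gamma> 0) - 0"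
    by (intro interval) (use t in auto)
  then show ?thesis by simp
qed

lemma fst_const:
  assumes t: "t \<in> {0..<T}" and neg: "Hs X (\<gamma> 0) + t < 0"
  shows "fst (\<gamma> t) = fst (\<gamma> 0)"
proof -
  have nv: "\<gamma> s \<noteq> star_vertex" if "s \<in> {0..t}" for s
  proof
    assume "\<gamma> s = star_vertex"
    moreover have "Hs X (\<gamma> s) = Hs X (\<gamma> 0) + s" using h_lin[of s] that t by auto
    ultimately show False using neg that Hs_vertex by auto
  qed
  have "(\<lambda>s. real (fst (\<gamma> s))) constant_on {0..t}"
  proof (rule continuous_discrete_range_constant)
    show "connected {0..t}" by simp
    show "continuous_on {0..t} (\<lambda>s. real (fst (\<gamma> s)))"
      unfolding continuous_on_iff
    proof (intro ballI allI impI)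
      fix x e :: real assume x: "x \<in> {0..t}" and e: "0 < e"
      then have xT: "x \<in> {0..<T}" using t by auto
      obtain d where d: "d > 0" "\<forall>s\<in>{0..<T}. \<bar>s - x\<bar> < d \<longrightarrow> fst (\<gamma> s) = fst (\<gamma> x)"
        using edge_loc[OF xT nv[OF x]] by blast
      show "\<exists>d>0. \<forall>x'\<in>{0..t}. dist x' x < d \<longrightarrow> dist (real (fst (\<gamma> x'))) (real (fst (\<gamma> x))) < e"
        by (rule exI[of _ d]) (use d e t in \<open>auto simp: dist_real_def\<close>)
    qed
    fix x assume "x \<in> {0..t}"
    show "\<exists>e>0. \<forall>y. y \<in> {0..t} \<and> real (fst (\<gamma> y)) \<noteq> real (fst (\<gamma> x)) \<longrightarrow> e \<le> norm (real (fst (\<gamma> y)) - real (fst (\<gamma> x)))"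
      by (rule exI[of _ 1]) (auto intro: nat_sep)
  qed
  then obtain c where "\<forall>s\<in>{0..t}. real (fst (\<gamma> s)) = c" unfolding constant_on_def by blast
  then have "real (fst (\<gamma> t)) = real (fst (\<gamma> 0))" using t by auto
  then show ?thesis by simp
qed

end

context starloc begin

lemma uniq:
  assumes s1: "star_solution K X \<gamma>1 T1" and s2: "star_solution K X \<gamma>2 T2"
    and e: "\<gamma>1 0 = P" "\<gamma>2 0 = P" and t: "t \<in> {0..<min T1 T2}"
  shows "\<gamma>1 t = \<gamma>2 t"
proof -
  interpret g1: starsol K X p \<gamma>1 T1 by unfold_locales (rule s1)
  interpret g2: starsol K X p \<gamma>2 T2 by unfold_locales (rule s2)
  have t1: "t \<in> {0..<T1}" and t2: "t \<in> {0..<T2}" using t by auto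
  have h1: "Hs X (\<gamma>1 t) = Hs X P + t" using g1.h_lin[OF t1] e by simp
  have h2: "Hs X (\<gamma>2 t) = Hs X P + t" using g2.h_lin[OF t2] e by simp
  show ?thesis
  proof (rule H_inj)
    show "\<gamma>1 t \<in> star_space K" using g1.sp[OF t1] by auto
    show "\<gamma>2 t \<in> star_space K" using g2.sp[OF t2] by auto
    show "Hs X (\<gamma>1 t) = Hs X (\<gamma>2 t)" using h1 h2 by simp
    show "Hs X (\<gamma>1 t) < 0 \<longrightarrow> fst (\<gamma>1 t) = fst (\<gamma>2 t)"
      using g1.fst_const[OF t1] g2.fst_const[OF t2] h1 e by auto
  qed
qed

end



lemma exist_edge:
  assumes i: "i < K" and x: "0 < x" "x < 1" and lsf: "generates_local_semiflow (X i)"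
  shows "\<exists>\<gamma> T. star_solution K X \<gamma> T \<and> \<gamma> 0 = (i, x)"
proof -
  obtain y T where es: "edge_solution (X i) y T" and y0: "y 0 = x"
  proof -
    have "x \<in> {0<..<1}" using x by auto
    then have "\<exists>T y. edge_solution (X i) y T \<and> y 0 = x"
      using lsf unfolding generates_local_semiflow_def by blast
    then show ?thesis using that by blast
  qed
  have T: "0 < T" and yt: "\<And>t. t \<in> {0..<T} \<Longrightarrow> y t \<in> {0<..<1} \<and> (y has_real_derivative X i (y t)) (at t within {0..<T})"
    using es unfolding edge_solution_def by auto
  have "star_solution K X (\<lambda>t. (i, y t)) T"
    unfolding star_solution_def
  proof (intro conjI ballI allI impI)
    show "0 < T" by fact
    fix t assume t: "t \<in> {0..<T}"
    show "(i, y t) \<in> star_space K" using yt[OF t] i by (auto simp: star_space_def)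
    show "((\<lambda>s. snd (i, y s)) has_real_derivative X (fst (i, y t)) (snd (i, y t))) (at t within {0..<T})"
      using yt[OF t] by simp
    show "(i, y t) = star_vertex \<Longrightarrow> \<exists>j<K. (\<forall>\<^sub>F s in at_right t. fst (i, y s) = j) \<and>
        ((\<lambda>s. snd (i, y s)) has_real_derivative X j 0) (at t within {t..<T})"
      using yt[OF t] by (auto simp: star_vertex_def)
    fix e :: real assume e: "0 < e"
    have "continuous (at t within {0..<T}) y" using yt[OF t] by (blast intro: DERIV_continuous)
    then obtain d where "d > 0" "\<forall>s\<in>{0..<T}. dist s t < d \<longrightarrow> dist (y s) (y t) < e"
      using e unfolding continuous_within_eps_delta by blast
    then show "\<exists>d>0. \<forall>s\<in>{0..<T}. \<bar>s - t\<bar> < d \<longrightarrow> stardist (i, y s) (i, y t) < e"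
      by (auto simp: dist_real_def)
  qed
  then show ?thesis using y0 by auto
qed

context starloc begin

lemma exist_vertex: "\<exists>\<gamma> T. star_solution K X \<gamma> T \<and> \<gamma> 0 = star_vertex"
proof -
  define f where "f = phi X p"
  define a :: real where "a = -1/2"
  define b :: real where "b = 1/2"
  have fmono: "\<And>x y. -1 < x \<Longrightarrow> x < y \<Longrightarrow> y < 1 \<Longrightarrow> f x < f y"
    unfolding f_def using phi_inc[OF pK ppos] by blast
  have fder: "\<And>x. -1 < x \<Longrightarrow> x < 1 \<Longrightarrow> (f has_real_derivative 1 / X p (max x 0)) (at x)"
    unfolding f_def using phi_deriv[OF pK] by blast
  have fcont: "\<And>x. -1 < x \<Longrightarrow> x < 1 \<Longrightarrow> isCont f x" using fder by (blast intro: DERIV_isCont)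
  have fc: "continuous_on {a..b} f"
    by (rule continuous_at_imp_continuous_on) (auto simp: a_def b_def intro!: fcont)
  have f0: "f 0 = 0" by (simp add: f_def phi0)
  have finj: "\<And>x y. x \<in> {a..b} \<Longrightarrow> y \<in> {a..b} \<Longrightarrow> f x = f y \<Longrightarrow> x = y"
    unfolding f_def using phi_inj[OF pK] by (auto simp: a_def b_def)
  define g where "g t = (THE z. z \<in> {a..b} \<and> f z = t)" for t
  have gf: "g (f z) = z" if "z \<in> {a..b}" for z
    unfolding g_def by (rule the_equality) (use that finj in auto)
  have fg: "g t \<in> {a..b} \<and> f (g t) = t" if "t \<in> {f a..f b}" for t
  proof -
    have "f a \<le> t" "t \<le> f b" "a \<le> b" using that by (auto simp: a_def b_def)
    then obtain z where "a \<le> z" "z \<le> b" "f z = t" using IVT'[of f a t b] fc by blast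
    then show ?thesis using gf[of z] by auto
  qed
  have fa: "f a < 0" using fmono[of a 0] f0 by (simp add: a_def)
  have fb: "0 < f b" using fmono[of 0 b] f0 by (simp add: b_def)
  define T where "T = f b"
  have g0: "g 0 = 0" using gf[of 0] f0 by (simp add: a_def b_def)
  have gin: "a < g t \<and> g t < b" if "f a < t" "t < f b" for t
    using fg[of t] that by (cases "g t = a"; cases "g t = b") auto
  have gcont: "isCont g t" if "f a < t" "t < f b" for t
  proof -
    have "isCont g (f (g t))"
      by (rule isCont_inverse_function2[where a=a and x="g t" and b=b and f=f and g=g]) (use gin[OF that] gf in \<open>auto intro!: fcont simp: a_def b_def\<close>)
    then show ?thesis using fg[of t] that by simp
  qed
  have gder: "(g has_real_derivative inverse (1 / X p (max (g t) 0))) (at t)" if "f a < t" "t < f b" for t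
  proof (rule DERIV_inverse_function[where f=f and g=g and x=t and a="f a" and b="f b"])
    show "(f has_real_derivative 1 / X p (max (g t) 0)) (at (g t))"
      using gin[OF that] fder by (auto simp: a_def b_def)
    show "1 / X p (max (g t) 0) \<noteq> 0"
      using gin[OF that] nonsing pK by (auto simp: a_def b_def)
    show "\<And>y. f a < y \<Longrightarrow> y < f b \<Longrightarrow> f (g y) = y" using fg by auto
    show "isCont g t" using gcont[OF that] .
  qed (use that in auto)
  have gpos: "0 \<le> g t \<and> g t < 1 \<and> (t \<noteq> 0 \<longrightarrow> 0 < g t)" if "t \<in> {0..<T}" for t
  proof -
    have t: "f a < t" "t < f b" using that fa by (auto simp: T_def)
    have g: "a < g t" "g t < b" "f (g t) = t" using gin[OF t] fg[of t] t by auto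
    have "\<not> g t < 0"
    proof
      assume "g t < 0"
      then have "f (g t) < f 0" using fmono[of "g t" 0] g by (auto simp: a_def)
      then show False using g f0 that by auto
    qed
    moreover have "t \<noteq> 0 \<longrightarrow> g t \<noteq> 0" using g f0 by auto
    ultimately show ?thesis using g by (auto simp: b_def)
  qed
  define \<gamma> where "\<gamma> t = (if t = 0 then star_vertex else (p, g t))" for t
  have sndg: "(\<lambda>s. snd (\<gamma> s)) = g" using g0 by (auto simp: \<gamma>_def star_vertex_def fun_eq_iff)
  have sdist: "stardist (\<gamma> s) (\<gamma> t) = \<bar>g s - g t\<bar>" if "s \<in> {0..<T}" "t \<in> {0..<T}" for s t
    using gpos[OF that(1)] gpos[OF that(2)] g0 by (auto simp: \<gamma>_def star_vertex_def)
  have "star_solution K X \<gamma> T"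
    unfolding star_solution_def
  proof (intro conjI ballI allI impI)
    show "0 < T" using fb by (simp add: T_def)
    fix t assume t: "t \<in> {0..<T}"
    have t': "f a < t" "t < f b" using t fa by (auto simp: T_def)
    have dg: "(g has_real_derivative X p (g t)) (at t)"
      using gder[OF t'] gpos[OF t] by simp
    show "\<gamma> t \<in> star_space K" using gpos[OF t] pK by (auto simp: \<gamma>_def star_space_def)
    show "((\<lambda>s. snd (\<gamma> s)) has_real_derivative X (fst (\<gamma> t)) (snd (\<gamma> t))) (at t within {0..<T})"
      if "\<gamma> t \<noteq> star_vertex"
    proof -
      have "t \<noteq> 0" using that by (auto simp: \<gamma>_def)
      then show ?thesis using dg unfolding sndg by (simp add: \<gamma>_def has_field_derivative_at_within)
    qed
    show "\<exists>j<K. (\<forall>\<^sub>F s in at_right t. fst (\<gamma> s) = j) \<and>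
        ((\<lambda>s. snd (\<gamma> s)) has_real_derivative X j 0) (at t within {t..<T})"
      if "\<gamma> t = star_vertex"
    proof -
      have "t = 0" using that gpos[OF t] by (auto simp: \<gamma>_def star_vertex_def split: if_splits)
      have ev: "\<forall>\<^sub>F s in at_right t. fst (\<gamma> s) = p"
        using eventually_at_right_less[of t] by eventually_elim (use \<open>t = 0\<close> in \<open>auto simp: \<gamma>_def\<close>)
      show ?thesis
        using pK ev dg \<open>t = 0\<close> g0 unfolding sndg by (auto intro: has_field_derivative_at_within)
    qed
    fix e :: real assume e: "0 < e"
    obtain d where "d > 0" "\<forall>s. dist s t < d \<longrightarrow> dist (g s) (g t) < e"
      using gcont[OF t'] e unfolding continuous_at_eps_delta by blast
    then show "\<exists>d>0. \<forall>s\<in>{0..<T}. \<bar>s - t\<bar> < d \<longrightarrow> stardist (\<gamma> s) (\<gamma> t) < e"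
      using sdist t by (auto simp: dist_real_def)
  qed
  moreover have "\<gamma> 0 = star_vertex" by (simp add: \<gamma>_def)
  ultimately show ?thesis by blast
qed

end

theorem mainTheorem9:
  fixes K :: nat and X :: "nat \<Rightarrow> real \<Rightarrow> real"
  assumes cont: "\<forall>i<K. continuous_on {0..<1} (X i)"
    and nonsing: "\<forall>i<K. \<forall>x\<in>{0..<1}. X i x \<noteq> 0"
    and local_sf: "\<forall>i<K. generates_local_semiflow (X i)"
    and same_mag: "\<forall>i<K. \<forall>j<K. \<bar>X i 0\<bar> = \<bar>X j 0\<bar>"
    and one_pos: "\<exists>!i. i < K \<and> 0 < X i 0"
  shows "generates_semiflow K X"
proof -
  obtain p where p: "p < K" "0 < X p 0" and pu: "\<And>i. i < K \<and> 0 < X i 0 \<Longrightarrow> i = p"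
    using one_pos by blast
  have oneg: "\<forall>i<K. i \<noteq> p \<longrightarrow> X i 0 < 0"
  proof (intro allI impI)
    fix i assume "i < K" "i \<noteq> p"
    then have "X i 0 \<noteq> 0" "\<not> 0 < X i 0" using nonsing pu by auto
    then show "X i 0 < 0" by linarith
  qed
  interpret starloc K X p using cont nonsing p oneg by unfold_locales auto
  show ?thesis
    unfolding generates_semiflow_def
  proof (intro ballI conjI allI impI)
    fix P assume P: "P \<in> star_space K"
    show "\<exists>\<gamma> T. star_solution K X \<gamma> T \<and> \<gamma> 0 = P"
    proof (cases "P = star_vertex")
      case True then show ?thesis using exist_vertex by simp
    next
      case False
      then obtain i x where "P = (i, x)" "i < K" "0 < x" "x < 1" using P by (auto simp: star_space_def)
      then show ?thesis using exist_edge[of i K x X] local_sf by auto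
    qed
    fix \<gamma>1 T1 \<gamma>2 T2 t
    assume "star_solution K X \<gamma>1 T1 \<and> star_solution K X \<gamma>2 T2 \<and> \<gamma>1 0 = P \<and> \<gamma>2 0 = P"
      and "t \<in> {0..<min T1 T2}"
    then show "\<gamma>1 t = \<gamma>2 t" using uniq by blast
  qed
qed



end
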